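(* Every finite field extension $K$ of a Brauer field $k$ is a Brauer field.
   Context: A field $k$ is a Brauer field if for every $d\ge 1$ there is a number $N_k(d)$ such that every equation $a_1x_1^d+\cdots+a_nx_n^d=0$ with $n>N_k(d)$ and $a_i\in k$ has a non-trivial solution in $k^n$. *)

theory Defs
  imports Main
begin

definition brauer_field :: "'k::field itself \<Rightarrow> bool" where
  "brauer_field _ \<longleftrightarrow>
     (\<forall>d::nat. d \<ge> 1 \<longrightarrow>
        (\<exists>N::nat. \<forall>n > N. \<forall>a :: nat \<Rightarrow> 'k.
            \<exists>x :: nat \<Rightarrow> 'k. (\<exists>i<n. x i \<noteq> 0) \<and> (\<Sum>i<n. a i * x i ^ d) = 0))"

text \<open>A field homomorphism (automatically injective), making K an extension of k.\<close>
definition field_hom :: "('k::field \<Rightarrow> 'K::field) \<Rightarrow> bool" where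
  "field_hom f \<longleftrightarrow> f 1 = 1 \<and> (\<forall>x y. f (x + y) = f x + f y) \<and> (\<forall>x y. f (x * y) = f x * f y)"

text \<open>K is a finite extension of k via f: K is finitely generated (hence finite-dimensional)
  as a vector space over k, with scalar multiplication c \<cdot> v = f c * v.\<close>
definition finite_extension :: "('k::field \<Rightarrow> 'K::field) \<Rightarrow> bool" where
  "finite_extension f \<longleftrightarrow> field_hom f \<and>
     (\<exists>B :: 'K set. finite B \<and> (\<forall>v :: 'K. \<exists>c :: 'K \<Rightarrow> 'k. v = (\<Sum>b\<in>B. f (c b) * b)))"

end

theory Submission
  imports Defs
begin

lemma sum_blocks:
  fixes g :: "nat \<Rightarrow> 'a::comm_monoid_add"
  shows "(\<Sum>i<p*L. g i) = (\<Sum>q<p. \<Sum>k<L. g (q*L+k))"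
proof -
  have "(\<Sum>i<p*L. g i) = (\<Sum>q<p. sum g {q*L..<q*L+L})"
    by (rule sum.nat_group[symmetric])
  also have "\<dots> = (\<Sum>q<p. \<Sum>k<L. g (q*L+k))"
  proof (rule sum.cong[OF refl])
    fix q
    have "sum g {0+q*L..<L+q*L} = (\<Sum>k\<in>{0..<L}. g (k + q*L))"
      by (rule sum.shift_bounds_nat_ivl)
    then show "sum g {q*L..<q*L+L} = (\<Sum>k<L. g (q*L+k))"
      by (simp add: add.commute atLeast0LessThan)
  qed
  finally show ?thesis .
qed

lemma system_diag:
  fixes J :: "'j set"
  assumes br: "brauer_field TYPE('k::field)" and d: "d \<ge> 1" and fin: "finite J"
  shows "\<exists>M. \<forall>n>M. \<forall>b :: 'j \<Rightarrow> nat \<Rightarrow> 'k.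
           \<exists>t :: nat \<Rightarrow> 'k. (\<exists>i<n. t i \<noteq> 0) \<and> (\<forall>j\<in>J. (\<Sum>i<n. b j i * t i ^ d) = 0)"
  using fin
proof (induction J rule: finite_induct)
  case empty
  show ?case
    by (rule exI[of _ 0]) (auto intro!: exI[of _ "\<lambda>_. 1"])
next
  case (insert j0 J)
  from insert.IH obtain M where M: "\<And>n b. n > M \<Longrightarrow>
      \<exists>t :: nat \<Rightarrow> 'k. (\<exists>i<n. t i \<noteq> 0) \<and> (\<forall>j\<in>J. (\<Sum>i<n. b j i * t i ^ d) = 0)"
    by blast
  from br d obtain N where N: "\<And>n (a :: nat \<Rightarrow> 'k). n > N \<Longrightarrow>
      \<exists>x :: nat \<Rightarrow> 'k. (\<exists>i<n. x i \<noteq> 0) \<and> (\<Sum>i<n. a i * x i ^ d) = 0"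
    unfolding brauer_field_def by blast
  define L where "L = Suc N"
  define p where "p = Suc M"
  show ?case
  proof (rule exI[of _ "p*L"], intro allI impI)
    fix n and b :: "'j \<Rightarrow> nat \<Rightarrow> 'k"
    assume n: "n > p*L"
    have "\<forall>q. \<exists>s :: nat \<Rightarrow> 'k. (\<exists>k<L. s k \<noteq> 0) \<and> (\<Sum>k<L. b j0 (q*L+k) * s k ^ d) = 0"
    proof
      fix q
      show "\<exists>s :: nat \<Rightarrow> 'k. (\<exists>k<L. s k \<noteq> 0) \<and> (\<Sum>k<L. b j0 (q*L+k) * s k ^ d) = 0"
        using N[of L "\<lambda>k. b j0 (q*L+k)"] unfolding L_def by simp
    qed
    from choice[OF this] obtain S where S0: "\<forall>q. (\<exists>k<L. S q k \<noteq> 0) \<and> (\<Sum>k<L. b j0 (q*L+k) * S q k ^ d) = 0"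
      by blast
    have S: "\<And>q. (\<exists>k<L. S q k \<noteq> 0) \<and> (\<Sum>k<L. b j0 (q*L+k) * S q k ^ d) = 0"
      using S0 by blast
    define b' where "b' = (\<lambda>j q. \<Sum>k<L. b j (q*L+k) * S q k ^ d)"
    obtain u where u1: "\<exists>q<p. u q \<noteq> 0" and u2: "\<forall>j\<in>J. (\<Sum>q<p. b' j q * u q ^ d) = 0"
      using M[of p b'] unfolding p_def by auto
    define t where "t = (\<lambda>i. if i < p*L then S (i div L) (i mod L) * u (i div L) else 0)"
    have Lpos: "L > 0" unfolding L_def by simp
    have key: "(\<Sum>i<n. b j i * t i ^ d) = (\<Sum>q<p. b' j q * u q ^ d)" for j
    proof -
      have "(\<Sum>i<n. b j i * t i ^ d) = (\<Sum>i<p*L. b j i * t i ^ d)"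
        using n d by (intro sum.mono_neutral_right) (auto simp: t_def)
      also have "\<dots> = (\<Sum>q<p. \<Sum>k<L. b j (q*L+k) * t (q*L+k) ^ d)"
        by (rule sum_blocks)
      also have "\<dots> = (\<Sum>q<p. \<Sum>k<L. b j (q*L+k) * S q k ^ d * u q ^ d)"
      proof (intro sum.cong refl)
        fix q k assume q: "q \<in> {..<p}" and k: "k \<in> {..<L}"
        have lt: "q*L+k < p*L"
        proof -
          have "Suc q * L \<le> p * L" using q by (intro mult_le_mono1) auto
          then show ?thesis using k by simp
        qed
        have "(q*L+k) div L = q" "(q*L+k) mod L = k" using k Lpos by auto
        then show "b j (q*L+k) * t (q*L+k) ^ d = b j (q*L+k) * S q k ^ d * u q ^ d"
          using lt by (simp add: t_def power_mult_distrib)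
      qed
      also have "\<dots> = (\<Sum>q<p. b' j q * u q ^ d)"
        unfolding b'_def by (simp add: sum_distrib_right)
      finally show ?thesis .
    qed
    show "\<exists>t :: nat \<Rightarrow> 'k. (\<exists>i<n. t i \<noteq> 0) \<and> (\<forall>j\<in>insert j0 J. (\<Sum>i<n. b j i * t i ^ d) = 0)"
    proof (rule exI[of _ t], rule conjI)
      from u1 obtain q where q: "q < p" "u q \<noteq> 0" by blast
      from S[of q] obtain k where k: "k < L" "S q k \<noteq> 0" by blast
      have lt: "q*L+k < p*L"
      proof -
        have "Suc q * L \<le> p * L" using q by (intro mult_le_mono1) auto
        then show ?thesis using k by simp
      qed
      have "(q*L+k) div L = q" "(q*L+k) mod L = k" using k Lpos by auto
      then have "t (q*L+k) \<noteq> 0" using lt q k by (simp add: t_def)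
      then show "\<exists>i<n. t i \<noteq> 0" using lt n by (intro exI[of _ "q*L+k"]) auto
      show "\<forall>j\<in>insert j0 J. (\<Sum>i<n. b j i * t i ^ d) = 0"
      proof
        fix j assume "j \<in> insert j0 J"
        then show "(\<Sum>i<n. b j i * t i ^ d) = 0"
        proof
          assume "j = j0"
          have "(\<Sum>q<p. b' j0 q * u q ^ d) = 0"
            unfolding b'_def using S by simp
          then show ?thesis using key \<open>j = j0\<close> by simp
        next
          assume "j \<in> J" then show ?thesis using u2 key by simp
        qed
      qed
    qed
  qed
qed

lemma hom_add: "field_hom f \<Longrightarrow> f (x + y) = f x + f y"
  unfolding field_hom_def by blast
lemma hom_mul: "field_hom f \<Longrightarrow> f (x * y) = f x * f y"
  unfolding field_hom_def by blast
lemma hom_one: "field_hom f \<Longrightarrow> f 1 = 1"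
  unfolding field_hom_def by blast
lemma hom_zero: "field_hom f \<Longrightarrow> f 0 = 0"
proof -
  assume h: "field_hom f"
  have "f 0 + f 0 = f 0 + 0" using hom_add[OF h, of 0 0] by simp
  then show ?thesis by (metis add_left_cancel)
qed
lemma hom_pow: "field_hom f \<Longrightarrow> f (x ^ n) = f x ^ n"
  by (induction n) (simp_all add: hom_one hom_mul)
lemma hom_sum: "field_hom f \<Longrightarrow> f (sum g A) = (\<Sum>a\<in>A. f (g a))"
  by (induction A rule: infinite_finite_induct) (simp_all add: hom_zero hom_add)
lemma hom_inj0:
  assumes h: "field_hom f" and fx: "f x = 0" shows "x = 0"
proof (rule ccontr)
  assume "x \<noteq> 0"
  then have "f (x * inverse x) = 1" by (simp add: hom_one[OF h])
  then show False using fx by (simp add: hom_mul[OF h])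
qed

theorem proposition2p7:
  fixes f :: "'k::field \<Rightarrow> 'K::field"
  assumes "brauer_field TYPE('k)"
    and "finite_extension f"
  shows "brauer_field TYPE('K)"
proof -
  from assms(2) have hom: "field_hom f" and
    "\<exists>B :: 'K set. finite B \<and> (\<forall>v :: 'K. \<exists>c :: 'K \<Rightarrow> 'k. v = (\<Sum>b\<in>B. f (c b) * b))"
    unfolding finite_extension_def by auto
  then obtain B :: "'K set" where finB: "finite B"
    and span: "\<And>v. \<exists>c :: 'K \<Rightarrow> 'k. v = (\<Sum>b\<in>B. f (c b) * b)" by blast
    have mul: "\<And>x y. f (x * y) = f x * f y" using hom unfolding field_hom_def by auto
  show ?thesis
    unfolding brauer_field_def
  proof (intro allI impI)
    fix d :: nat assume d: "d \<ge> 1"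
    obtain M where M: "\<And>n (b :: 'K \<Rightarrow> nat \<Rightarrow> 'k). n > M \<Longrightarrow>
        \<exists>t :: nat \<Rightarrow> 'k. (\<exists>i<n. t i \<noteq> 0) \<and> (\<forall>j\<in>B. (\<Sum>i<n. b j i * t i ^ d) = 0)"
      using system_diag[OF assms(1) d finB] by blast
    show "\<exists>N. \<forall>n>N. \<forall>a :: nat \<Rightarrow> 'K. \<exists>x. (\<exists>i<n. x i \<noteq> 0) \<and> (\<Sum>i<n. a i * x i ^ d) = 0"
    proof (rule exI[of _ M], intro allI impI)
      fix n and a :: "nat \<Rightarrow> 'K" assume n: "n > M"
      define \<alpha> where "\<alpha> = (\<lambda>i. SOME c :: 'K \<Rightarrow> 'k. a i = (\<Sum>b\<in>B. f (c b) * b))"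
      have \<alpha>: "a i = (\<Sum>b\<in>B. f (\<alpha> i b) * b)" for i
        unfolding \<alpha>_def by (rule someI_ex[OF span])
      obtain t where t1: "\<exists>i<n. t i \<noteq> 0" and t2: "\<forall>j\<in>B. (\<Sum>i<n. \<alpha> i j * t i ^ d) = 0"
        using M[OF n, of "\<lambda>j i. \<alpha> i j"] by blast
      show "\<exists>x. (\<exists>i<n. x i \<noteq> 0) \<and> (\<Sum>i<n. a i * x i ^ d) = 0"
      proof (rule exI[of _ "\<lambda>i. f (t i)"], rule conjI)
        show "\<exists>i<n. f (t i) \<noteq> 0" using t1 hom_inj0[OF hom] by blast
        have "(\<Sum>i<n. a i * f (t i) ^ d) = (\<Sum>i<n. \<Sum>b\<in>B. f (\<alpha> i b * t i ^ d) * b)"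
        proof (rule sum.cong[OF refl])
          fix i
          have "a i * f (t i) ^ d = (\<Sum>b\<in>B. f (\<alpha> i b) * b * f (t i) ^ d)"
            using \<alpha>[of i] by (simp add: sum_distrib_right)
          also have "\<dots> = (\<Sum>b\<in>B. f (\<alpha> i b * t i ^ d) * b)"
            by (simp add: hom_mul[OF hom] hom_pow[OF hom] mult_ac)
          finally show "a i * f (t i) ^ d = (\<Sum>b\<in>B. f (\<alpha> i b * t i ^ d) * b)" .
        qed
        also have "\<dots> = (\<Sum>b\<in>B. \<Sum>i<n. f (\<alpha> i b * t i ^ d) * b)"
          by (rule sum.swap)
        also have "\<dots> = (\<Sum>b\<in>B. f (\<Sum>i<n. \<alpha> i b * t i ^ d) * b)"
          by (simp add: hom_sum[OF hom] sum_distrib_right)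
        also have "\<dots> = 0" using t2 hom_zero[OF hom] by simp
        finally show "(\<Sum>i<n. a i * f (t i) ^ d) = 0" .
      qed
    qed
  qed
qed

end
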